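(* Let $m=m_n\ge 1$ and $F=F_n=f^{(1)}\times\cdots\times f^{(m)}$ be such that $(F)_2\lesssim(F)_0$. Then, as $n\to\infty$, \[ \mathbb{P}(H^*_{nmF} \text{ is connected}) \to \begin{cases} 0 & \text{if } \log n - \frac{m}{n}(F)_1 \to +\infty,\\ 1 & \text{if } \log n - \frac{m}{n}(F)_1 \to -\infty.\end{cases} \]
   Context: Shotgun random hypergraph: given integers $n,m\ge1$ and probability distributions $f^{(1)},\dots,f^{(m)}$ on $\{0,\dots,n\}$, write $F=f^{(1)}\times\cdots\times f^{(m)}$. $H^*_{nmF}$ is the random hypergraph with node set $\{1,\dots,n\}$ and hyperedge set $\{V_1,\dots,V_m\}$ (duplicates merged), where $V_1,\dots,V_m\subset\{1,\dots,n\}$ are mutually independent and $\mathbb{P}(V_k=A)=f^{(k)}(|A|)\binom{n}{|A|}^{-1}$. A hypergraph on node set $V$ is connected if for every partition of $V$ into nonempty sets $V_1',V_2'$ some hyperedge meets both. Moments: $(F)_r=\frac1m\sum_{k=1}^m\sum_{x=2}^n x^r f^{(k)}(x)$. $a_n\lesssim b_n$ means $\limsup a_n/|b_n|<\infty$. *)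

theory Defs
  imports "HOL-Analysis.Analysis" "HOL-Library.Landau_Symbols"
begin

definition hg_connected :: "'a set \<Rightarrow> 'a set set \<Rightarrow> bool" where
  "hg_connected V E \<longleftrightarrow>
     (\<forall>V1 V2. V1 \<noteq> {} \<and> V2 \<noteq> {} \<and> V1 \<inter> V2 = {} \<and> V1 \<union> V2 = V \<longrightarrow>
        (\<exists>e\<in>E. e \<inter> V1 \<noteq> {} \<and> e \<inter> V2 \<noteq> {}))"

definition is_distr :: "nat \<Rightarrow> (nat \<Rightarrow> real) \<Rightarrow> bool" where
  "is_distr n p \<longleftrightarrow> (\<forall>x. 0 \<le> p x) \<and> (\<Sum>x\<le>n. p x) = 1"

text \<open>P(V = A) = p(|A|) / binom(n,|A|) for A a subset of {1..n}.\<close>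
definition edge_prob :: "nat \<Rightarrow> (nat \<Rightarrow> real) \<Rightarrow> nat set \<Rightarrow> real" where
  "edge_prob n p A = p (card A) / real (n choose card A)"

text \<open>Probability that the shotgun random hypergraph H*_{nmF} is connected;
  F k is the distribution f^(k), k = 1..m. The hyperedge set is the image of
  the m independent random sets (duplicates merged).\<close>
definition conn_prob :: "nat \<Rightarrow> nat \<Rightarrow> (nat \<Rightarrow> nat \<Rightarrow> real) \<Rightarrow> real" where
  "conn_prob n m F =
     (\<Sum>V\<in>PiE {1..m} (\<lambda>_. Pow {1..n}).
        (\<Prod>k\<in>{1..m}. edge_prob n (F k) (V k)) *
        (if hg_connected {1..n} (V ` {1..m}) then 1 else 0))"

definition moment :: "nat \<Rightarrow> nat \<Rightarrow> nat \<Rightarrow> (nat \<Rightarrow> nat \<Rightarrow> real) \<Rightarrow> real" where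
  "moment r n m F = (1 / real m) * (\<Sum>k\<in>{1..m}. \<Sum>x\<in>{2..n}. real x ^ r * F k x)"

end

theory Submission
  imports Defs "HOL-Analysis.Analysis"
begin


lemma sum_Pow_card:
  assumes "finite U"
  shows "(\<Sum>A\<in>Pow U. h (card A)) = (\<Sum>x\<le>card U. of_nat (card U choose x) * h x)"
proof -
  have "(\<Sum>A\<in>Pow U. h (card A)) = (\<Sum>x\<le>card U. \<Sum>A\<in>{A\<in>Pow U. card A = x}. h (card A))"
    using assms by (intro sum.group[symmetric]) (auto intro: card_mono)
  also have "\<dots> = (\<Sum>x\<le>card U. of_nat (card U choose x) * h x)"
  proof (rule sum.cong[OF refl])
    fix x assume "x \<in> {..card U}"
    have "(\<Sum>A\<in>{A\<in>Pow U. card A = x}. h (card A)) = (\<Sum>A\<in>{A\<in>Pow U. card A = x}. h x)"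
      by (rule sum.cong) auto
    moreover have "{A\<in>Pow U. card A = x} = {B. B \<subseteq> U \<and> card B = x}" by auto
    ultimately show "(\<Sum>A\<in>{A\<in>Pow U. card A = x}. h (card A)) = of_nat (card U choose x) * h x"
      using n_subsets[OF assms, of x] by simp
  qed
  finally show ?thesis .
qed

lemma sum_edge_Pow:
  assumes "finite S"
  shows "(\<Sum>A\<in>Pow S. edge_prob n p A) = (\<Sum>x\<le>card S. p x * (real (card S choose x) / real (n choose x)))"
  unfolding edge_prob_def using sum_Pow_card[OF assms, of "\<lambda>c. p c / real (n choose c)"]
  by (simp add: algebra_simps)

lemma sum_edge_total:
  assumes "is_distr n p"
  shows "(\<Sum>A\<in>Pow {1..n}. edge_prob n p A) = 1"
proof -
  have "(\<Sum>A\<in>Pow {1..n}. edge_prob n p A) = (\<Sum>x\<le>n. p x)"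
    by (subst sum_edge_Pow) (auto intro!: sum.cong)
  then show ?thesis using assms unfolding is_distr_def by simp
qed

lemma edge_prob_nonneg: "is_distr n p \<Longrightarrow> 0 \<le> edge_prob n p A"
  unfolding edge_prob_def is_distr_def by simp

lemma sum_PiE_prod:
  fixes h :: "nat \<Rightarrow> nat set \<Rightarrow> real"
  shows "(\<Sum>V\<in>PiE {1..m} (\<lambda>_. Pow {1..n}). \<Prod>k\<in>{1..m}. h k (V k)) = (\<Prod>k\<in>{1..m}. \<Sum>A\<in>Pow {1..n}. h k A)"
  by (rule prod_sum_PiE[symmetric]) auto

lemma binom_ratio_le:
  assumes "a \<le> n"
  shows "real (a choose x) * real n ^ x \<le> real (n choose x) * real a ^ x"
proof (cases "x \<le> a")
  case False
  then show ?thesis by (simp add: binomial_eq_0)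
next
  case True
  have "real (a choose x) * real n ^ x = (\<Prod>i = 0..<x. real (a - i) * real n / real (x - i))"
    using True by (simp add: binomial_altdef_of_nat prod.distrib prod_dividef)
  also have "\<dots> \<le> (\<Prod>i = 0..<x. real (n - i) * real a / real (x - i))"
  proof (rule prod_mono)
    fix i assume i: "i \<in> {0..<x}"
    have "real (a - i) * real n \<le> real (n - i) * real a"
      using i True assms mult_right_mono[of "real a" "real n" "real i"]
      by (simp add: of_nat_diff algebra_simps)
    then show "0 \<le> real (a - i) * real n / real (x - i) \<and>
       real (a - i) * real n / real (x - i) \<le> real (n - i) * real a / real (x - i)"
      by (auto intro: divide_right_mono)
  qed
  also have "\<dots> = real (n choose x) * real a ^ x"
    using True assms by (simp add: binomial_altdef_of_nat prod.distrib prod_dividef)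
  finally show ?thesis .
qed

lemma sum_split01:
  fixes h :: "nat \<Rightarrow> real"
  assumes "1 \<le> n"
  shows "(\<Sum>x\<le>n. h x) = h 0 + h 1 + (\<Sum>x=2..n. h x)"
proof -
  have "{..n} = insert 0 (insert 1 {2..n})" using assms by auto
  then show ?thesis by simp
qed

lemma sum_extend_binom:
  fixes p :: "nat \<Rightarrow> real"
  assumes "a \<le> n"
  shows "(\<Sum>x\<le>a. p x * (real (a choose x) / c x)) = (\<Sum>x\<le>n. p x * (real (a choose x) / c x))"
  using assms by (intro sum.mono_neutral_left) (auto simp: binomial_eq_0)

lemma edge_singleton: "i \<in> {1..n} \<Longrightarrow> edge_prob n p {i} = p 1 / real n"
  unfolding edge_prob_def by simp

lemma u_formula:
  assumes d: "is_distr n p" and i: "i \<in> {1..n}"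
  shows "(\<Sum>A\<in>Pow {1..n}. edge_prob n p A * (if i \<notin> A \<or> A = {i} then 1 else 0))
         = 1 - (\<Sum>x=2..n. real x * p x) / real n"
proof -
  have n1: "1 \<le> n" using i by auto
  have "(\<Sum>A\<in>Pow {1..n}. edge_prob n p A * (if i \<notin> A \<or> A = {i} then 1 else 0))
        = (\<Sum>A\<in>{A\<in>Pow {1..n}. i \<notin> A \<or> A = {i}}. edge_prob n p A)"
    by (simp add: sum.inter_filter[symmetric] if_distrib cong: if_cong)
  also have "{A\<in>Pow {1..n}. i \<notin> A \<or> A = {i}} = insert {i} (Pow ({1..n} - {i}))"
    using i by auto
  also have "sum (edge_prob n p) \<dots> = edge_prob n p {i} + sum (edge_prob n p) (Pow ({1..n} - {i}))"
    by (subst sum.insert) auto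
  also have "sum (edge_prob n p) (Pow ({1..n} - {i})) = (\<Sum>x\<le>n - 1. p x * (real (n - 1 choose x) / real (n choose x)))"
    using i by (subst sum_edge_Pow) auto
  also have "\<dots> = (\<Sum>x\<le>n. p x * (real (n - 1 choose x) / real (n choose x)))"
    by (rule sum_extend_binom) simp
  also have "\<dots> = (\<Sum>x\<le>n. p x - real x * p x / real n)"
  proof (rule sum.cong[OF refl])
    fix x assume x: "x \<in> {..n}"
    have "real (n - x) * real (n choose x) = real n * real (n - 1 choose x)"
      using binomial_absorb_comp[of n x] by (metis of_nat_mult)
    moreover have "real (n choose x) > 0" using x by simp
    ultimately have "real (n - 1 choose x) / real (n choose x) = (real n - real x) / real n"
      using x n1 by (simp add: field_simps of_nat_diff)
    then show "p x * (real (n - 1 choose x) / real (n choose x)) = p x - real x * p x / real n"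
      using n1 by (simp add: diff_divide_distrib right_diff_distrib)
  qed
  also have "\<dots> = 1 - (\<Sum>x\<le>n. real x * p x) / real n"
    using d unfolding is_distr_def by (simp add: sum_subtractf sum_divide_distrib)
  also have "(\<Sum>x\<le>n. real x * p x) = p 1 + (\<Sum>x=2..n. real x * p x)"
    using n1 by (subst sum_split01) auto
  finally show ?thesis using i by (simp add: edge_singleton field_simps)
qed

lemma ratio_aux: "(b::real) > 0 \<Longrightarrow> c \<noteq> 0 \<Longrightarrow> a * b = c * d \<Longrightarrow> d / b = a / c"
  by (simp add: field_simps)

lemma v_formula:
  assumes d: "is_distr n p" and i: "i \<in> {1..n}" and j: "j \<in> {1..n}" and ij: "i \<noteq> j"
  shows "(\<Sum>A\<in>Pow {1..n}. edge_prob n p A * (if i \<notin> A \<or> A = {i} then 1 else 0) * (if j \<notin> A \<or> A = {j} then 1 else 0))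
         = 1 - 2 * (\<Sum>x=2..n. real x * p x) / real n
             + (\<Sum>x=2..n. real x * (real x - 1) * p x) / (real n * (real n - 1))"
proof -
  have n2: "2 \<le> n" using i j ij by auto
  have "(\<Sum>A\<in>Pow {1..n}. edge_prob n p A * (if i \<notin> A \<or> A = {i} then 1 else 0) * (if j \<notin> A \<or> A = {j} then 1 else 0))
        = (\<Sum>A\<in>{A\<in>Pow {1..n}. (i \<notin> A \<or> A = {i}) \<and> (j \<notin> A \<or> A = {j})}. edge_prob n p A)"
    by (subst sum.inter_filter) (auto intro!: sum.cong)
  also have "{A\<in>Pow {1..n}. (i \<notin> A \<or> A = {i}) \<and> (j \<notin> A \<or> A = {j})} = insert {i} (insert {j} (Pow ({1..n} - {i,j})))"
    using i j ij by auto
  also have "sum (edge_prob n p) \<dots> = edge_prob n p {i} + edge_prob n p {j} + sum (edge_prob n p) (Pow ({1..n} - {i,j}))"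
    using ij by (subst sum.insert; auto)+
  also have "card ({1..n} - {i,j}) = n - 2" using i j ij by (subst card_Diff_subset) auto
  then have "sum (edge_prob n p) (Pow ({1..n} - {i,j})) = (\<Sum>x\<le>n - 2. p x * (real (n - 2 choose x) / real (n choose x)))"
    by (subst sum_edge_Pow) auto
  also have "\<dots> = (\<Sum>x\<le>n. p x * (real (n - 2 choose x) / real (n choose x)))"
    by (rule sum_extend_binom) simp
  also have "\<dots> = (\<Sum>x\<le>n. p x - 2 * (real x * p x) / real n + real x * (real x - 1) * p x / (real n * (real n - 1)))"
  proof (rule sum.cong[OF refl])
    fix x assume x: "x \<in> {..n}"
    have a1: "(n - x) * (n choose x) = n * (n - 1 choose x)"
      using binomial_absorb_comp[of n x] by simp
    have a2: "(n - 1 - x) * (n - 1 choose x) = (n - 1) * (n - 2 choose x)"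
      using binomial_absorb_comp[of "n - 1" x] by (simp add: numeral_2_eq_2)
    have "(n - x) * (n - 1 - x) * (n choose x) = n * (n - 1) * (n - 2 choose x)"
      using a1 a2 by (metis mult.assoc mult.commute)
    then have "real (n - x) * real (n - 1 - x) * real (n choose x) = real n * real (n - 1) * real (n - 2 choose x)"
      by (metis of_nat_mult)
    moreover have "real (n - x) * real (n - 1 - x) = (real n - real x) * (real n - 1 - real x)"
      using x by (cases "x = n") (auto simp: of_nat_diff)
    moreover have "real (n - 1) = real n - 1" using n2 by (simp add: of_nat_diff)
    ultimately have E: "((real n - real x) * (real n - 1 - real x)) * real (n choose x) = (real n * (real n - 1)) * real (n - 2 choose x)"
      by simp
    have "real (n choose x) > 0" using x by simp
    moreover have "real n * (real n - 1) \<noteq> 0" using n2 by simp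
    ultimately have "real (n - 2 choose x) / real (n choose x) = (real n - real x) * (real n - 1 - real x) / (real n * (real n - 1))"
      using ratio_aux E by blast
    also have "\<dots> = 1 - 2 * real x / real n + real x * (real x - 1) / (real n * (real n - 1))"
      using n2 by (simp add: field_simps)
    finally have R: "real (n - 2 choose x) / real (n choose x) = 1 - 2 * real x / real n + real x * (real x - 1) / (real n * (real n - 1))" .
    have nn: "real n \<noteq> 0" "real n - 1 \<noteq> 0" using n2 by auto
    show "p x * (real (n - 2 choose x) / real (n choose x)) = p x - 2 * (real x * p x) / real n + real x * (real x - 1) * p x / (real n * (real n - 1))"
      unfolding R using nn by (simp add: field_simps)
  qed
  also have "\<dots> = 1 - 2 * (\<Sum>x\<le>n. real x * p x) / real n + (\<Sum>x\<le>n. real x * (real x - 1) * p x) / (real n * (real n - 1))"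
    using d unfolding is_distr_def by (simp add: sum.distrib sum_subtractf sum_divide_distrib sum_distrib_left)
  also have "(\<Sum>x\<le>n. real x * p x) = p 1 + (\<Sum>x=2..n. real x * p x)"
    using n2 by (subst sum_split01) auto
  also have "(\<Sum>x\<le>n. real x * (real x - 1) * p x) = (\<Sum>x=2..n. real x * (real x - 1) * p x)"
    using n2 by (subst sum_split01) auto
  finally show ?thesis using i j by (simp add: edge_singleton field_simps)
qed

lemma q_formula:
  assumes S: "S \<subseteq> {1..n}" and n1: "1 \<le> n"
  shows "(\<Sum>A\<in>Pow {1..n}. edge_prob n p A * (if A \<inter> S = {} \<or> A \<subseteq> S then 1 else 0))
         = p 0 + p 1 + (\<Sum>x=2..n. p x * ((real (card S choose x) + real (n - card S choose x)) / real (n choose x)))"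
proof -
  have fS: "finite S" using S finite_subset by blast
  have cS: "card S \<le> n" using card_mono[OF _ S] by simp
  have cC: "card ({1..n} - S) = n - card S" using S by (simp add: card_Diff_subset fS)
  have "(\<Sum>A\<in>Pow {1..n}. edge_prob n p A * (if A \<inter> S = {} \<or> A \<subseteq> S then 1 else 0))
        = (\<Sum>A\<in>{A\<in>Pow {1..n}. A \<inter> S = {} \<or> A \<subseteq> S}. edge_prob n p A)"
    by (subst sum.inter_filter) (auto intro!: sum.cong)
  also have "{A\<in>Pow {1..n}. A \<inter> S = {} \<or> A \<subseteq> S} = Pow S \<union> Pow ({1..n} - S)"
    using S by auto
  also have "sum (edge_prob n p) (Pow S \<union> Pow ({1..n} - S)) = sum (edge_prob n p) (Pow S) + sum (edge_prob n p) (Pow ({1..n} - S)) - sum (edge_prob n p) (Pow S \<inter> Pow ({1..n} - S))"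
    using sum.union_inter[of "Pow S" "Pow ({1..n} - S)" "edge_prob n p"] fS by simp
  also have "Pow S \<inter> Pow ({1..n} - S) = {{}}" by auto
  also have "sum (edge_prob n p) (Pow S) = (\<Sum>x\<le>n. p x * (real (card S choose x) / real (n choose x)))"
    by (subst sum_edge_Pow[OF fS]) (rule sum_extend_binom[OF cS])
  also have "sum (edge_prob n p) (Pow ({1..n} - S)) = (\<Sum>x\<le>n. p x * (real (n - card S choose x) / real (n choose x)))"
    by (subst sum_edge_Pow) (simp_all only: cC sum_extend_binom finite_Diff finite_atLeastAtMost diff_le_self)
  finally have "(\<Sum>A\<in>Pow {1..n}. edge_prob n p A * (if A \<inter> S = {} \<or> A \<subseteq> S then 1 else 0))
     = (\<Sum>x\<le>n. p x * ((real (card S choose x) + real (n - card S choose x)) / real (n choose x))) - p 0"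
    by (simp add: edge_prob_def sum.distrib[symmetric] add_divide_distrib distrib_left)
  also have "\<dots> = p 0 + p 1 + (\<Sum>x=2..n. p x * ((real (card S choose x) + real (n - card S choose x)) / real (n choose x)))"
    using n1 cS by (subst sum_split01) (auto simp: of_nat_diff field_simps)
  finally show ?thesis .
qed

lemma q_compl:
  assumes d: "is_distr n p" and n1: "1 \<le> n" and q: "q = p 0 + p 1 + (\<Sum>x=2..n. p x * r x)"
  shows "1 - q = (\<Sum>x=2..n. p x * (1 - r x))"
proof -
  have "1 = p 0 + p 1 + (\<Sum>x=2..n. p x)" using d n1 sum_split01[OF n1, of p] unfolding is_distr_def by simp
  then show ?thesis using q by (simp add: algebra_simps sum_subtractf)
qed

lemma bonferroni_pow:
  fixes t :: real
  assumes "0 \<le> t" "t \<le> 1"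
  shows "(1 - t) ^ x \<le> 1 - real x * t + real x * (real x - 1) / 2 * t\<^sup>2"
proof (induction x)
  case 0
  then show ?case by simp
next
  case (Suc x)
  have "(1 - t) ^ Suc x = (1 - t) * (1 - t) ^ x" by simp
  also have "\<dots> \<le> (1 - t) * (1 - real x * t + real x * (real x - 1) / 2 * t\<^sup>2)"
    using Suc assms by (intro mult_left_mono) auto
  also have "\<dots> = 1 - real (Suc x) * t + real (Suc x) * (real (Suc x) - 1) / 2 * t\<^sup>2
                    - real x * (real x - 1) / 2 * t ^ 3"
    by (simp add: of_nat_Suc power2_eq_square power3_eq_cube diff_divide_distrib add_divide_distrib algebra_simps)
  also have "\<dots> \<le> 1 - real (Suc x) * t + real (Suc x) * (real (Suc x) - 1) / 2 * t\<^sup>2"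
  proof -
    have "0 \<le> real x * (real x - 1) / 2 * t ^ 3"
      using assms by (cases x) auto
    then show ?thesis by linarith
  qed
  finally show ?case .
qed

lemma binom_ratio_pow:
  assumes "a \<le> n" "x \<le> n" "0 < n"
  shows "real (a choose x) / real (n choose x) \<le> (real a / real n) ^ x"
proof -
  have "real (n choose x) > 0" using assms by simp
  then show ?thesis using binom_ratio_le[OF assms(1), of x] assms
    by (simp add: field_simps power_divide)
qed

lemma r_bounds:
  assumes x2: "2 \<le> x" and xn: "x \<le> n" and s1: "1 \<le> s" and sn: "2 * s \<le> n"
  defines "t \<equiv> real s / real n"
  shows "1 - (real (s choose x) + real (n - s choose x)) / real (n choose x) \<ge> real x * t - (real x)\<^sup>2 * t\<^sup>2"
    and "1 - (real (s choose x) + real (n - s choose x)) / real (n choose x) \<ge> t"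
proof -
  have n0: "0 < n" using s1 sn by simp
  have t0: "0 \<le> t" and t1: "t \<le> 1/2" using sn n0 by (auto simp: t_def field_simps)
  have r1: "real (s choose x) / real (n choose x) \<le> t ^ x"
    using binom_ratio_pow[of s n x] sn xn n0 by (simp add: t_def)
  have r2: "real (n - s choose x) / real (n choose x) \<le> (1 - t) ^ x"
    using binom_ratio_pow[of "n - s" n x] sn xn n0 by (simp add: t_def of_nat_diff diff_divide_distrib)
  have tx: "t ^ x \<le> t\<^sup>2" using power_decreasing[of 2 x t] x2 t0 t1 by simp
  have tx': "(1 - t) ^ x \<le> (1 - t)\<^sup>2" using power_decreasing[of 2 x "1 - t"] x2 t0 t1 by simp
  have split: "(real (s choose x) + real (n - s choose x)) / real (n choose x)
     = real (s choose x) / real (n choose x) + real (n - s choose x) / real (n choose x)"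
    by (simp add: add_divide_distrib)
  have B: "(1 - t) ^ x \<le> 1 - real x * t + real x * (real x - 1) / 2 * t\<^sup>2"
    using bonferroni_pow t0 t1 by simp
  have "real x * (real x - 1) / 2 * t\<^sup>2 + t\<^sup>2 \<le> (real x)\<^sup>2 * t\<^sup>2"
  proof -
    have "0 \<le> (real x + 2) * (real x - 1)" using x2 by simp
    then have "real x * (real x - 1) / 2 + 1 \<le> (real x)\<^sup>2"
      by (simp add: power2_eq_square field_simps algebra_simps)
    from mult_right_mono[OF this, of "t\<^sup>2"] show ?thesis by (simp add: algebra_simps diff_divide_distrib add_divide_distrib)
  qed
  then show "1 - (real (s choose x) + real (n - s choose x)) / real (n choose x) \<ge> real x * t - (real x)\<^sup>2 * t\<^sup>2"
    using r1 r2 tx B split by linarith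
  have "t * (2*t - 1) \<le> 0" using t0 t1 by (intro mult_nonneg_nonpos) auto
  then have "t\<^sup>2 + (1 - t)\<^sup>2 \<le> 1 - t" by (simp add: power2_eq_square algebra_simps)
  then show "1 - (real (s choose x) + real (n - s choose x)) / real (n choose x) \<ge> t"
    using r1 r2 tx tx' split by linarith
qed



lemma cheb_zero:
  fixes w N :: "'a \<Rightarrow> real"
  assumes fin: "finite \<Omega>" and w0: "\<And>V. V \<in> \<Omega> \<Longrightarrow> 0 \<le> w V" and w1: "(\<Sum>V\<in>\<Omega>. w V) = 1"
    and E: "E = (\<Sum>V\<in>\<Omega>. w V * N V)" and E2: "E2 = (\<Sum>V\<in>\<Omega>. w V * (N V)\<^sup>2)"
    and Epos: "E > 0" and PN: "\<And>V. V \<in> \<Omega> \<Longrightarrow> P V \<Longrightarrow> N V = 0"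
  shows "(\<Sum>V\<in>\<Omega>. w V * (if P V then 1 else 0)) \<le> (E2 - E\<^sup>2) / E\<^sup>2"
proof -
  have "E\<^sup>2 * (\<Sum>V\<in>\<Omega>. w V * (if P V then 1 else 0)) = (\<Sum>V\<in>\<Omega>. w V * (E\<^sup>2 * (if P V then 1 else 0)))"
    by (simp add: sum_distrib_left algebra_simps)
  also have "\<dots> \<le> (\<Sum>V\<in>\<Omega>. w V * (N V - E)\<^sup>2)"
  proof (rule sum_mono)
    fix V assume V: "V \<in> \<Omega>"
    have "E\<^sup>2 * (if P V then 1 else 0) \<le> (N V - E)\<^sup>2"
      using PN[OF V] by (cases "P V") auto
    then show "w V * (E\<^sup>2 * (if P V then 1 else 0)) \<le> w V * (N V - E)\<^sup>2"
      using w0[OF V] by (rule mult_left_mono)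
  qed
  also have "(\<Sum>V\<in>\<Omega>. w V * (N V - E)\<^sup>2) = E2 - 2 * E * E + E\<^sup>2 * (\<Sum>V\<in>\<Omega>. w V)"
  proof -
    have "(\<Sum>V\<in>\<Omega>. w V * (N V - E)\<^sup>2) = (\<Sum>V\<in>\<Omega>. w V * (N V)\<^sup>2 - 2 * E * (w V * N V) + E\<^sup>2 * w V)"
      by (rule sum.cong) (auto simp: power2_eq_square algebra_simps)
    also have "\<dots> = (\<Sum>V\<in>\<Omega>. w V * (N V)\<^sup>2) - 2 * E * (\<Sum>V\<in>\<Omega>. w V * N V) + E\<^sup>2 * (\<Sum>V\<in>\<Omega>. w V)"
      by (simp add: sum.distrib sum_subtractf sum_distrib_left)
    finally show ?thesis unfolding E2 E .
  qed
  also have "\<dots> = E2 - E\<^sup>2" using w1 by (simp add: power2_eq_square)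
  finally show ?thesis using Epos by (simp add: field_simps)
qed



lemma disconnected_witness:
  fixes n m :: nat and V :: "nat \<Rightarrow> nat set"
  assumes V: "\<And>k. k \<in> {1..m} \<Longrightarrow> V k \<subseteq> {1..n}"
    and nc: "\<not> hg_connected {1..n} (V ` {1..m})"
  shows "\<exists>S. S \<subseteq> {1..n} \<and> 1 \<le> card S \<and> 2 * card S \<le> n \<and> (\<forall>k\<in>{1..m}. V k \<inter> S = {} \<or> V k \<subseteq> S)"
proof -
  obtain V1 V2 where ne: "V1 \<noteq> {}" "V2 \<noteq> {}" and dis: "V1 \<inter> V2 = {}" and un: "V1 \<union> V2 = {1..n}"
    and no: "\<And>k. k \<in> {1..m} \<Longrightarrow> \<not> (V k \<inter> V1 \<noteq> {} \<and> V k \<inter> V2 \<noteq> {})"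
  proof -
    have "\<exists>V1 V2. V1 \<noteq> {} \<and> V2 \<noteq> {} \<and> V1 \<inter> V2 = {} \<and> V1 \<union> V2 = {1..n} \<and> (\<forall>k\<in>{1..m}. \<not> (V k \<inter> V1 \<noteq> {} \<and> V k \<inter> V2 \<noteq> {}))"
      using nc unfolding hg_connected_def by simp
    then show ?thesis using that by metis
  qed
  have sub: "V1 \<subseteq> {1..n}" "V2 \<subseteq> {1..n}" using un by auto
  have f1: "finite V1" "finite V2" using sub by (auto intro: finite_subset)
  have cn: "card V1 + card V2 = n" using card_Un_disjoint[OF f1 dis] un by simp
  have c1: "1 \<le> card V1" "1 \<le> card V2" using ne f1 by (auto simp: Suc_le_eq card_gt_0_iff)
  show ?thesis
  proof (cases "2 * card V1 \<le> n")
    case True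
    have "\<forall>k\<in>{1..m}. V k \<inter> V1 = {} \<or> V k \<subseteq> V1"
    proof
      fix k assume k: "k \<in> {1..m}"
      show "V k \<inter> V1 = {} \<or> V k \<subseteq> V1"
      proof (cases "V k \<inter> V1 = {}")
        case False
        then have "V k \<inter> V2 = {}" using no[OF k] by simp
        then show ?thesis using V[OF k] un by blast
      qed simp
    qed
    moreover note sub(1)
    ultimately show ?thesis using True c1 by (intro exI[of _ V1]) simp
  next
    case False
    have "\<forall>k\<in>{1..m}. V k \<inter> V2 = {} \<or> V k \<subseteq> V2"
    proof
      fix k assume k: "k \<in> {1..m}"
      show "V k \<inter> V2 = {} \<or> V k \<subseteq> V2"
      proof (cases "V k \<inter> V2 = {}")
        case False
        then have "V k \<inter> V1 = {}" using no[OF k] by simp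
        then show ?thesis using V[OF k] un by blast
      qed simp
    qed
    moreover have "2 * card V2 \<le> n" using False cn by linarith
    moreover note sub(2)
    ultimately show ?thesis using c1 by (intro exI[of _ V2]) simp
  qed
qed



definition Om :: "nat \<Rightarrow> nat \<Rightarrow> (nat \<Rightarrow> nat set) set" where
  "Om n m = PiE {1..m} (\<lambda>_. Pow {1..n})"
definition wt :: "nat \<Rightarrow> nat \<Rightarrow> (nat \<Rightarrow> nat \<Rightarrow> real) \<Rightarrow> (nat \<Rightarrow> nat set) \<Rightarrow> real" where
  "wt n m F V = (\<Prod>k\<in>{1..m}. edge_prob n (F k) (V k))"
definition Sm :: "nat \<Rightarrow> nat \<Rightarrow> nat \<Rightarrow> (nat \<Rightarrow> nat \<Rightarrow> real) \<Rightarrow> real" where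
  "Sm j n m F = (\<Sum>k\<in>{1..m}. \<Sum>x=2..n. real x ^ j * F k x)"

lemma finite_Om: "finite (Om n m)"
  unfolding Om_def by (auto intro!: finite_PiE)

lemma wt_nonneg: "(\<And>k. k \<in> {1..m} \<Longrightarrow> is_distr n (F k)) \<Longrightarrow> 0 \<le> wt n m F V"
  unfolding wt_def by (auto intro!: prod_nonneg edge_prob_nonneg)

lemma wt_sum:
  assumes d: "\<And>k. k \<in> {1..m} \<Longrightarrow> is_distr n (F k)"
  shows "(\<Sum>V\<in>Om n m. wt n m F V) = 1"
  unfolding wt_def Om_def
  apply (subst sum_PiE_prod[of "\<lambda>k A. edge_prob n (F k) A" m n])
  apply (rule prod.neutral)
  using d sum_edge_total by blast

lemma conn_eq: "conn_prob n m F = (\<Sum>V\<in>Om n m. wt n m F V * (if hg_connected {1..n} (V ` {1..m}) then 1 else 0))"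
  unfolding conn_prob_def Om_def wt_def ..

lemma sum_wt_prod:
  "(\<Sum>V\<in>Om n m. wt n m F V * (\<Prod>k\<in>{1..m}. h k (V k)))
   = (\<Prod>k\<in>{1..m}. \<Sum>A\<in>Pow {1..n}. edge_prob n (F k) A * h k A)"
  unfolding wt_def Om_def
  by (subst sum_PiE_prod[symmetric]) (simp add: prod.distrib)

lemma q_prod_bound:
  assumes d: "\<And>k. k \<in> {1..m} \<Longrightarrow> is_distr n (F k)"
    and S: "S \<subseteq> {1..n}" and s1: "1 \<le> card S" and s2: "2 * card S \<le> n"
  defines "t \<equiv> real (card S) / real n"
  shows "(\<Prod>k\<in>{1..m}. \<Sum>A\<in>Pow {1..n}. edge_prob n (F k) A * (if A \<inter> S = {} \<or> A \<subseteq> S then 1 else 0))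
         \<le> exp (- max (t * Sm 1 n m F - t\<^sup>2 * Sm 2 n m F) (t * Sm 0 n m F))"
proof -
  define q where "q k = (\<Sum>A\<in>Pow {1..n}. edge_prob n (F k) A * (if A \<inter> S = {} \<or> A \<subseteq> S then 1 else 0 :: real))" for k
  define r where "r x = (real (card S choose x) + real (n - card S choose x)) / real (n choose x)" for x
  have n1: "1 \<le> n" using s1 s2 by linarith
  have q0: "0 \<le> q k" if "k \<in> {1..m}" for k
    unfolding q_def using d[OF that] by (auto intro!: sum_nonneg mult_nonneg_nonneg edge_prob_nonneg)
  have qc: "1 - q k = (\<Sum>x=2..n. F k x * (1 - r x))" if k: "k \<in> {1..m}" for k
    using q_compl[OF d[OF k] n1, of "q k" r] q_formula[OF S n1, of "F k"] unfolding q_def r_def by simp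
  have Fnn: "0 \<le> F k x" if "k \<in> {1..m}" for k x using d[OF that] unfolding is_distr_def by simp
  have lb1: "1 - q k \<ge> t * (\<Sum>x=2..n. real x ^ 1 * F k x) - t\<^sup>2 * (\<Sum>x=2..n. real x ^ 2 * F k x)"
    if k: "k \<in> {1..m}" for k
  proof -
    have "(\<Sum>x=2..n. F k x * (real x * t - (real x)\<^sup>2 * t\<^sup>2)) \<le> (\<Sum>x=2..n. F k x * (1 - r x))"
    proof (rule sum_mono)
      fix x assume x: "x \<in> {2..n}"
      have "real x * t - (real x)\<^sup>2 * t\<^sup>2 \<le> 1 - r x"
        using r_bounds(1)[of x n "card S"] x s1 s2 unfolding r_def t_def by auto
      then show "F k x * (real x * t - (real x)\<^sup>2 * t\<^sup>2) \<le> F k x * (1 - r x)"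
        using Fnn[OF k] by (rule mult_left_mono)
    qed
    moreover have "(\<Sum>x=2..n. F k x * (real x * t - (real x)\<^sup>2 * t\<^sup>2)) = t * (\<Sum>x=2..n. real x ^ 1 * F k x) - t\<^sup>2 * (\<Sum>x=2..n. real x ^ 2 * F k x)"
      by (simp add: sum_distrib_left sum_subtractf algebra_simps)
    ultimately show ?thesis using qc[OF k] by simp
  qed
  have lb2: "1 - q k \<ge> t * (\<Sum>x=2..n. real x ^ 0 * F k x)" if k: "k \<in> {1..m}" for k
  proof -
    have "(\<Sum>x=2..n. F k x * t) \<le> (\<Sum>x=2..n. F k x * (1 - r x))"
    proof (rule sum_mono)
      fix x assume x: "x \<in> {2..n}"
      have "t \<le> 1 - r x"
        using r_bounds(2)[of x n "card S"] x s1 s2 unfolding r_def t_def by auto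
      then show "F k x * t \<le> F k x * (1 - r x)"
        using Fnn[OF k] by (rule mult_left_mono)
    qed
    moreover have "(\<Sum>x=2..n. F k x * t) = t * (\<Sum>x=2..n. real x ^ 0 * F k x)"
      by (simp add: sum_distrib_left algebra_simps)
    ultimately show ?thesis using qc[OF k] by simp
  qed
  have L1: "(\<Sum>k\<in>{1..m}. 1 - q k) \<ge> t * Sm 1 n m F - t\<^sup>2 * Sm 2 n m F"
  proof -
    have "(\<Sum>k\<in>{1..m}. 1 - q k) \<ge> (\<Sum>k\<in>{1..m}. t * (\<Sum>x=2..n. real x ^ 1 * F k x) - t\<^sup>2 * (\<Sum>x=2..n. real x ^ 2 * F k x))"
      using lb1 by (intro sum_mono) auto
    then show ?thesis unfolding Sm_def by (simp add: sum_subtractf sum_distrib_left)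
  qed
  have L2: "(\<Sum>k\<in>{1..m}. 1 - q k) \<ge> t * Sm 0 n m F"
  proof -
    have "(\<Sum>k\<in>{1..m}. 1 - q k) \<ge> (\<Sum>k\<in>{1..m}. t * (\<Sum>x=2..n. real x ^ 0 * F k x))"
      using lb2 by (intro sum_mono) auto
    then show ?thesis unfolding Sm_def by (simp add: sum_distrib_left)
  qed
  have "(\<Prod>k\<in>{1..m}. q k) \<le> (\<Prod>k\<in>{1..m}. exp (q k - 1))"
  proof (rule prod_mono)
    fix k assume k: "k \<in> {1..m}"
    show "0 \<le> q k \<and> q k \<le> exp (q k - 1)" using q0[OF k] exp_ge_add_one_self[of "q k - 1"] by simp
  qed
  also have "\<dots> = exp (- (\<Sum>k\<in>{1..m}. 1 - q k))"
    by (simp add: exp_sum[symmetric] sum_negf[symmetric])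
  also have "\<dots> \<le> exp (- max (t * Sm 1 n m F - t\<^sup>2 * Sm 2 n m F) (t * Sm 0 n m F))"
    using L1 L2 by simp
  finally show ?thesis unfolding q_def .
qed

lemma dir2_bound:
  assumes d: "\<And>k. k \<in> {1..m} \<Longrightarrow> is_distr n (F k)" and n1: "1 \<le> n"
  shows "1 - conn_prob n m F \<le> (\<Sum>s=1..n. if 2 * s \<le> n then real (n choose s) *
     exp (- max (real s / real n * Sm 1 n m F - (real s / real n)\<^sup>2 * Sm 2 n m F) (real s / real n * Sm 0 n m F)) else 0)"
proof -
  define SS where "SS = {S\<in>Pow {1..n}. 1 \<le> card S \<and> 2 * card S \<le> n}"
  define \<nu> where "\<nu> S A = (if A \<inter> S = {} \<or> A \<subseteq> S then 1 else 0 :: real)" for S A :: "nat set"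
  define B where "B s = exp (- max (real s / real n * Sm 1 n m F - (real s / real n)\<^sup>2 * Sm 2 n m F) (real s / real n * Sm 0 n m F))" for s
  define C where "C V = hg_connected {1..n} (V ` {1..m})" for V
  have fSS: "finite SS" unfolding SS_def by simp
  have "1 - conn_prob n m F = (\<Sum>V\<in>Om n m. wt n m F V) - (\<Sum>V\<in>Om n m. wt n m F V * (if C V then 1 else 0))"
    using wt_sum[OF d] conn_eq unfolding C_def by simp
  also have "\<dots> = (\<Sum>V\<in>Om n m. wt n m F V * (if C V then 0 else 1))"
    by (simp add: sum_subtractf[symmetric]) (rule sum.cong; simp)
  also have "\<dots> \<le> (\<Sum>V\<in>Om n m. wt n m F V * (\<Sum>S\<in>SS. \<Prod>k\<in>{1..m}. \<nu> S (V k)))"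
  proof (rule sum_mono)
    fix V assume V: "V \<in> Om n m"
    have nn: "0 \<le> (\<Prod>k\<in>{1..m}. \<nu> S (V k))" for S unfolding \<nu>_def by (auto intro: prod_nonneg)
    have "(if C V then 0 else 1) \<le> (\<Sum>S\<in>SS. \<Prod>k\<in>{1..m}. \<nu> S (V k))"
    proof (cases "C V")
      case True
      then show ?thesis using nn by (simp add: sum_nonneg)
    next
      case False
      have Vk: "\<And>k. k \<in> {1..m} \<Longrightarrow> V k \<subseteq> {1..n}" using V unfolding Om_def by auto
      have ncon: "\<not> hg_connected {1..n} (V ` {1..m})" using False unfolding C_def .
      obtain S where S: "S \<subseteq> {1..n}" "1 \<le> card S" "2 * card S \<le> n" and nc: "\<forall>k\<in>{1..m}. V k \<inter> S = {} \<or> V k \<subseteq> S"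
      proof -
        have "\<exists>S. S \<subseteq> {1..n} \<and> 1 \<le> card S \<and> 2 * card S \<le> n \<and> (\<forall>k\<in>{1..m}. V k \<inter> S = {} \<or> V k \<subseteq> S)"
          apply (rule disconnected_witness)
          using Vk ncon by auto
        then show ?thesis using that by auto
      qed
      have SSS: "S \<in> SS" using S unfolding SS_def by simp
      have "(\<Prod>k\<in>{1..m}. \<nu> S (V k)) = 1" using nc unfolding \<nu>_def by (intro prod.neutral) auto
      moreover have "(\<Prod>k\<in>{1..m}. \<nu> S (V k)) \<le> (\<Sum>S\<in>SS. \<Prod>k\<in>{1..m}. \<nu> S (V k))"
        using SSS fSS nn by (intro member_le_sum) auto
      ultimately show ?thesis using False by simp
    qed
    then show "wt n m F V * (if C V then 0 else 1) \<le> wt n m F V * (\<Sum>S\<in>SS. \<Prod>k\<in>{1..m}. \<nu> S (V k))"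
      using wt_nonneg[OF d] by (rule mult_left_mono)
  qed
  also have "\<dots> = (\<Sum>S\<in>SS. \<Sum>V\<in>Om n m. wt n m F V * (\<Prod>k\<in>{1..m}. \<nu> S (V k)))"
    unfolding sum_distrib_left by (rule sum.swap)
  also have "\<dots> = (\<Sum>S\<in>SS. \<Prod>k\<in>{1..m}. \<Sum>A\<in>Pow {1..n}. edge_prob n (F k) A * \<nu> S A)"
    by (rule sum.cong[OF refl]) (rule sum_wt_prod)
  also have "\<dots> \<le> (\<Sum>S\<in>SS. B (card S))"
  proof (rule sum_mono)
    fix S assume "S \<in> SS"
    then have S: "S \<subseteq> {1..n}" "1 \<le> card S" "2 * card S \<le> n" unfolding SS_def by auto
    show "(\<Prod>k\<in>{1..m}. \<Sum>A\<in>Pow {1..n}. edge_prob n (F k) A * \<nu> S A) \<le> B (card S)"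
      using q_prod_bound[OF d S] unfolding \<nu>_def B_def by simp
  qed
  also have "(\<Sum>S\<in>SS. B (card S)) = (\<Sum>S\<in>Pow {1..n}. (if 1 \<le> card S \<and> 2 * card S \<le> n then B (card S) else 0))"
    unfolding SS_def by (rule sum.inter_filter) simp
  also have "\<dots> = (\<Sum>s\<le>n. real (n choose s) * (if 1 \<le> s \<and> 2 * s \<le> n then B s else 0))"
    using sum_Pow_card[of "{1..n}" "\<lambda>c. if 1 \<le> c \<and> 2 * c \<le> n then B c else 0"] by simp
  also have "\<dots> = (\<Sum>s=1..n. if 2 * s \<le> n then real (n choose s) * B s else 0)"
  proof -
    have "{..n} = insert 0 {1..n}" by auto
    then show ?thesis by (simp add: if_distrib cong: if_cong)
  qed
  finally show ?thesis unfolding B_def .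
qed

lemma conn_no_isolated:
  fixes n m i :: nat and V :: "nat \<Rightarrow> nat set"
  assumes V: "\<And>k. k \<in> {1..m} \<Longrightarrow> V k \<subseteq> {1..n}" and n2: "2 \<le> n"
    and c: "hg_connected {1..n} (V ` {1..m})" and i: "i \<in> {1..n}"
  shows "\<exists>k\<in>{1..m}. \<not> (i \<notin> V k \<or> V k = {i})"
proof -
  have "(if i = 1 then 2 else 1) \<in> {1..n} - {i}" using n2 i by auto
  then have "{1..n} - {i} \<noteq> {}" by blast
  then have P: "{i} \<noteq> {} \<and> {1..n} - {i} \<noteq> {} \<and> {i} \<inter> ({1..n} - {i}) = {} \<and> {i} \<union> ({1..n} - {i}) = {1..n}"
    using i by auto
  have "\<exists>e\<in>V ` {1..m}. e \<inter> {i} \<noteq> {} \<and> e \<inter> ({1..n} - {i}) \<noteq> {}"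
  proof -
    have H: "\<forall>V1 V2. V1 \<noteq> {} \<and> V2 \<noteq> {} \<and> V1 \<inter> V2 = {} \<and> V1 \<union> V2 = {1..n} \<longrightarrow>
        (\<exists>e\<in>V ` {1..m}. e \<inter> V1 \<noteq> {} \<and> e \<inter> V2 \<noteq> {})"
      using c unfolding hg_connected_def .
    show ?thesis using mp[OF spec[OF spec[OF H, of "{i}"], of "{1..n} - {i}"] P] .
  qed
  then obtain k where k: "k \<in> {1..m}" and "V k \<inter> {i} \<noteq> {}" "V k \<inter> ({1..n} - {i}) \<noteq> {}" by blast
  then have "i \<in> V k" "V k \<noteq> {i}" by auto
  then show ?thesis using k by blast
qed

lemma dir1_bound:
  assumes d: "\<And>k. k \<in> {1..m} \<Longrightarrow> is_distr n (F k)" and n2: "2 \<le> n"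
    and U: "U = (\<Prod>k\<in>{1..m}. 1 - (\<Sum>x=2..n. real x * F k x) / real n)"
    and W: "W = (\<Prod>k\<in>{1..m}. 1 - 2 * (\<Sum>x=2..n. real x * F k x) / real n
             + (\<Sum>x=2..n. real x * (real x - 1) * F k x) / (real n * (real n - 1)))"
    and Upos: "U > 0"
  shows "conn_prob n m F \<le> (real n * U + real n * (real n - 1) * W - (real n * U)\<^sup>2) / (real n * U)\<^sup>2"
proof -
  define \<iota> where "\<iota> i A = (if i \<notin> A \<or> A = {i} then 1 else 0 :: real)" for i :: nat and A :: "nat set"
  define N where "N V = (\<Sum>i\<in>{1..n}. \<Prod>k\<in>{1..m}. \<iota> i (V k))" for V :: "nat \<Rightarrow> nat set"
  have EU: "(\<Sum>V\<in>Om n m. wt n m F V * (\<Prod>k\<in>{1..m}. \<iota> i (V k))) = U" if i: "i \<in> {1..n}" for i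
  proof -
    have "(\<Sum>V\<in>Om n m. wt n m F V * (\<Prod>k\<in>{1..m}. \<iota> i (V k))) = (\<Prod>k\<in>{1..m}. \<Sum>A\<in>Pow {1..n}. edge_prob n (F k) A * \<iota> i A)"
      by (rule sum_wt_prod)
    also have "\<dots> = U" unfolding U \<iota>_def using u_formula[OF d i] by (intro prod.cong) auto
    finally show ?thesis .
  qed
  have EW: "(\<Sum>V\<in>Om n m. wt n m F V * (\<Prod>k\<in>{1..m}. \<iota> i (V k) * \<iota> j (V k))) = (if i = j then U else W)"
    if i: "i \<in> {1..n}" and j: "j \<in> {1..n}" for i j
  proof (cases "i = j")
    case True
    have "(\<Prod>k\<in>{1..m}. \<iota> i (V k) * \<iota> j (V k)) = (\<Prod>k\<in>{1..m}. \<iota> i (V k))" for V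
      using True unfolding \<iota>_def by (intro prod.cong) auto
    then show ?thesis using EU[OF i] True by simp
  next
    case False
    have "(\<Sum>V\<in>Om n m. wt n m F V * (\<Prod>k\<in>{1..m}. \<iota> i (V k) * \<iota> j (V k))) = (\<Prod>k\<in>{1..m}. \<Sum>A\<in>Pow {1..n}. edge_prob n (F k) A * (\<iota> i A * \<iota> j A))"
      by (rule sum_wt_prod)
    also have "\<dots> = W" unfolding W \<iota>_def using v_formula[OF d i j False]
      by (intro prod.cong) (auto simp: mult.assoc)
    finally show ?thesis using False by simp
  qed
  define E where "E = (\<Sum>V\<in>Om n m. wt n m F V * N V)"
  define E2 where "E2 = (\<Sum>V\<in>Om n m. wt n m F V * (N V)\<^sup>2)"
  have E_eq: "E = real n * U"
  proof -
    have "E = (\<Sum>i\<in>{1..n}. \<Sum>V\<in>Om n m. wt n m F V * (\<Prod>k\<in>{1..m}. \<iota> i (V k)))"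
      unfolding E_def N_def sum_distrib_left by (rule sum.swap)
    also have "\<dots> = (\<Sum>i\<in>{1..n}. U)" using EU by simp
    finally show ?thesis by simp
  qed
  have E2_eq: "E2 = real n * U + real n * (real n - 1) * W"
  proof -
    have sq: "(N V)\<^sup>2 = (\<Sum>i\<in>{1..n}. \<Sum>j\<in>{1..n}. \<Prod>k\<in>{1..m}. \<iota> i (V k) * \<iota> j (V k))" for V
      unfolding N_def power2_eq_square sum_product prod.distrib ..
    have "E2 = (\<Sum>V\<in>Om n m. \<Sum>i\<in>{1..n}. \<Sum>j\<in>{1..n}. wt n m F V * (\<Prod>k\<in>{1..m}. \<iota> i (V k) * \<iota> j (V k)))"
      unfolding E2_def sq sum_distrib_left ..
    also have "\<dots> = (\<Sum>i\<in>{1..n}. \<Sum>V\<in>Om n m. \<Sum>j\<in>{1..n}. wt n m F V * (\<Prod>k\<in>{1..m}. \<iota> i (V k) * \<iota> j (V k)))"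
      by (rule sum.swap)
    also have "\<dots> = (\<Sum>i\<in>{1..n}. \<Sum>j\<in>{1..n}. \<Sum>V\<in>Om n m. wt n m F V * (\<Prod>k\<in>{1..m}. \<iota> i (V k) * \<iota> j (V k)))"
      by (rule sum.cong[OF refl], rule sum.swap)
    also have "\<dots> = (\<Sum>i\<in>{1..n}. \<Sum>j\<in>{1..n}. if i = j then U else W)"
      using EW by simp
    also have "\<dots> = (\<Sum>i\<in>{1..n}. U + (real n - 1) * W)"
    proof (rule sum.cong[OF refl])
      fix i assume i: "i \<in> {1..n}"
      have "(\<Sum>j\<in>{1..n}. if i = j then U else W) = (if i = i then U else W) + (\<Sum>j\<in>{1..n} - {i}. if i = j then U else W)"
        using i by (subst sum.remove[of _ i]) auto
      also have "(\<Sum>j\<in>{1..n} - {i}. if i = j then U else W) = (\<Sum>j\<in>{1..n} - {i}. W)"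
        by (rule sum.cong) auto
      also have "\<dots> = (real n - 1) * W" using i by (simp add: of_nat_diff)
      finally show "(\<Sum>j\<in>{1..n}. if i = j then U else W) = U + (real n - 1) * W" by simp
    qed
    finally show ?thesis by (simp add: algebra_simps)
  qed
  have "conn_prob n m F = (\<Sum>V\<in>Om n m. wt n m F V * (if hg_connected {1..n} (V ` {1..m}) then 1 else 0))"
    by (rule conn_eq)
  also have "\<dots> \<le> (E2 - E\<^sup>2) / E\<^sup>2"
  proof (rule cheb_zero[OF finite_Om _ wt_sum[OF d] E_def E2_def])
    show "0 \<le> wt n m F V" for V using wt_nonneg[OF d] .
    show "0 < E" using E_eq Upos n2 by simp
    fix V assume V: "V \<in> Om n m" and c: "hg_connected {1..n} (V ` {1..m})"
    have Vk: "\<And>k. k \<in> {1..m} \<Longrightarrow> V k \<subseteq> {1..n}" using V unfolding Om_def by auto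
    have Z: "(\<Prod>k\<in>{1..m}. \<iota> i (V k)) = 0" if i: "i \<in> {1..n}" for i
    proof -
      obtain k where "k \<in> {1..m}" "\<not> (i \<notin> V k \<or> V k = {i})"
        using conn_no_isolated[OF Vk n2 c i] by blast
      then show ?thesis unfolding \<iota>_def by (intro prod_zero) auto
    qed
    show "N V = 0" unfolding N_def by (rule sum.neutral) (use Z in blast)
  qed
  finally show ?thesis unfolding E_eq E2_eq .
qed



lemma pow_fact_le_exp:
  fixes x :: real assumes "0 \<le> x"
  shows "x ^ s / fact s \<le> exp x"
proof -
  have e: "(\<lambda>n. x ^ n / fact n) sums exp x"
    using exp_converges[of x] by (simp add: divide_inverse mult.commute)
  show ?thesis
    using sum_le_suminf[OF sums_summable[OF e], of "{s}"] sums_unique[OF e] assms by simp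
qed

lemma binom_le_exp:
  assumes s1: "1 \<le> s" and sn: "s \<le> n"
  shows "real (n choose s) \<le> exp (real s * (1 + ln (real n) - ln (real s)))"
proof -
  have "(n choose s) * fact s \<le> n ^ s"
  proof -
    have "fact s * fact (n - s) * (n choose s) = fact n" using binomial_fact_lemma[OF sn] .
    then have "fact n = ((n choose s) * fact s) * fact (n - s)" by (simp add: ac_simps)
    then have "(n choose s) * fact s = fact n div fact (n - s)" by simp
    with fact_div_fact_le_pow[OF sn] show ?thesis by simp
  qed
  then have A: "real (n choose s) * fact s \<le> real n ^ s"
    by (metis of_nat_fact of_nat_le_iff of_nat_mult of_nat_power)
  have B: "real s ^ s / fact s \<le> exp (real s)" by (rule pow_fact_le_exp) simp
  have sp: "real s > 0" using s1 by simp
  have np: "real n > 0" using s1 sn by simp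
  have fp: "(fact s :: real) > 0" by simp
  have "real (n choose s) \<le> real n ^ s / fact s" using A fp by (simp add: field_simps)
  also have "\<dots> = (real n / real s) ^ s * (real s ^ s / fact s)" using sp by (simp add: power_divide)
  also have "\<dots> \<le> (real n / real s) ^ s * exp (real s)" using B np sp by (intro mult_left_mono) auto
  also have "(real n / real s) ^ s = exp (real s * (ln (real n) - ln (real s)))"
  proof -
    have "(real n / real s) ^ s = exp (ln ((real n / real s) ^ s))" using np sp by simp
    also have "ln ((real n / real s) ^ s) = real s * ln (real n / real s)" using np sp by (simp add: ln_realpow)
    also have "ln (real n / real s) = ln (real n) - ln (real s)" using np sp by (simp add: ln_div)
    finally show ?thesis .
  qed
  also have "exp (real s * (ln (real n) - ln (real s))) * exp (real s) = exp (real s * (1 + ln (real n) - ln (real s)))"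
    by (simp add: exp_add[symmetric] algebra_simps)
  finally show ?thesis .
qed

lemma term_bound:
  fixes n s :: nat and C S0 S1 S2 :: real
  assumes s1: "1 \<le> s" and sn: "2 * s \<le> n" and C1: "1 \<le> C" and S0: "0 \<le> S0"
    and S01: "2 * S0 \<le> S1" and S12: "2 * S1 \<le> S2" and S20: "S2 \<le> C * S0"
    and om: "ln (real n) \<le> S1 / real n" and sq: "C * ln (real n) \<le> 2 * sqrt (real n)"
  shows "real (n choose s) * exp (- max (real s / real n * S1 - (real s / real n)\<^sup>2 * S2) (real s / real n * S0))
         \<le> exp (real s * (2 - 3 * (S1 / real n - ln (real n)) / 4)) + 2 ^ n * exp (- real n * (S1 / real n) / C\<^sup>2)"
proof -
  define t where "t = real s / real n"
  define lam where "lam = S1 / real n"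
  define \<omega> where "\<omega> = lam - ln (real n)"
  have n2: "2 \<le> n" using s1 sn by linarith
  have np: "real n > 0" using n2 by simp
  have sp: "real s > 0" using s1 by simp
  have lnn: "0 \<le> ln (real n)" using n2 by simp
  have om0: "0 \<le> \<omega>" using om unfolding \<omega>_def lam_def by simp
  have lam0: "0 \<le> lam" using om lnn unfolding lam_def by simp
  have S1eq: "S1 = real n * lam" using np unfolding lam_def by simp
  have tS1: "t * S1 = real s * lam" using np unfolding t_def S1eq by simp
  have t0: "0 \<le> t" unfolding t_def by simp
  have E2: "0 \<le> 2 ^ n * exp (- real n * (S1 / real n) / C\<^sup>2)" by simp
  show ?thesis
  proof (cases "2 * C * real s \<le> real n")
    case True
    define \<epsilon> where "\<epsilon> = C * t / 2"
    have eps: "\<epsilon> \<le> 1/4" "0 \<le> \<epsilon>" using True np C1 t0 unfolding \<epsilon>_def t_def by (auto simp: field_simps)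
    have "t\<^sup>2 * S2 \<le> t\<^sup>2 * (C * S0)" using S20 by (intro mult_left_mono) auto
    also have "\<dots> \<le> t\<^sup>2 * (C * (S1 / 2))" using S01 C1 by (intro mult_left_mono) auto
    also have "\<dots> = \<epsilon> * (real s * lam)" unfolding \<epsilon>_def tS1[symmetric] by (simp add: power2_eq_square)
    finally have "t * S1 - t\<^sup>2 * S2 \<ge> real s * lam * (1 - \<epsilon>)" using tS1 by (simp add: algebra_simps)
    then have M: "max (t * S1 - t\<^sup>2 * S2) (t * S0) \<ge> real s * lam * (1 - \<epsilon>)" by linarith
    have key: "\<epsilon> * ln (real n) - ln (real s) \<le> 1"
    proof (cases "s * s \<le> n")
      case True
      have ss: "real s \<le> sqrt (real n)" using True by (intro real_le_rsqrt) (simp add: power2_eq_square of_nat_mult[symmetric] del: of_nat_mult)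
      have "\<epsilon> * ln (real n) = C * ln (real n) * real s / (2 * real n)" unfolding \<epsilon>_def t_def by (simp add: field_simps)
      also have "\<dots> \<le> C * ln (real n) * sqrt (real n) / (2 * real n)"
        using ss C1 lnn np by (intro divide_right_mono mult_left_mono) auto
      also have "\<dots> = C * ln (real n) / (2 * sqrt (real n))"
        using np by (simp add: field_simps)
      also have "\<dots> \<le> 1" using sq np by (simp add: field_simps)
      moreover have "0 \<le> ln (real s)" using s1 by simp
      ultimately show ?thesis by linarith
    next
      case False
      then have "real n < real s * real s" by (metis of_nat_less_iff of_nat_mult not_le)
      then have "ln (real n) < ln (real s * real s)" using np by simp
      then have "ln (real n) < 2 * ln (real s)" using sp by (simp add: ln_mult)
      moreover have "\<epsilon> * ln (real n) \<le> ln (real n) / 4" using mult_right_mono[OF eps(1) lnn] by simp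
      ultimately show ?thesis using lnn by linarith
    qed
    have br: "1 + ln (real n) - ln (real s) - lam * (1 - \<epsilon>) \<le> 2 - 3 * \<omega> / 4"
    proof -
      have "lam * (1 - \<epsilon>) = (ln (real n) + \<omega>) * (1 - \<epsilon>)" unfolding \<omega>_def by simp
      moreover have "\<omega> * (1 - \<epsilon>) \<ge> \<omega> * (3/4)" using om0 eps by (intro mult_left_mono) auto
      ultimately show ?thesis using key by (simp add: algebra_simps)
    qed
    have "real (n choose s) * exp (- max (t * S1 - t\<^sup>2 * S2) (t * S0))
          \<le> exp (real s * (1 + ln (real n) - ln (real s))) * exp (- (real s * lam * (1 - \<epsilon>)))"
      using binom_le_exp[OF s1] sn M by (intro mult_mono) auto
    also have "\<dots> = exp (real s * (1 + ln (real n) - ln (real s) - lam * (1 - \<epsilon>)))"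
      by (simp add: exp_add[symmetric] algebra_simps)
    also have "\<dots> \<le> exp (real s * (2 - 3 * \<omega> / 4))"
      using br sp by (simp add: mult_left_mono)
    finally show ?thesis using E2 unfolding t_def \<omega>_def lam_def by linarith
  next
    case False
    have CS0: "S0 \<ge> 2 * S1 / C" using S12 S20 C1 by (simp add: field_simps)
    have "real n * lam / C\<^sup>2 \<le> 2 * real s * lam / C"
    proof -
      have "real n * lam \<le> 2 * C * real s * lam" using False lam0 by (intro mult_right_mono) auto
      then show ?thesis using C1 by (simp add: field_simps power2_eq_square)
    qed
    also have "2 * real s * lam / C = t * (2 * S1 / C)" using tS1 by (simp add: field_simps)
    also have "\<dots> \<le> t * S0" using CS0 t0 by (intro mult_left_mono)
    finally have M: "max (t * S1 - t\<^sup>2 * S2) (t * S0) \<ge> real n * lam / C\<^sup>2" by linarith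
    have "real (n choose s) * exp (- max (t * S1 - t\<^sup>2 * S2) (t * S0)) \<le> 2 ^ n * exp (- (real n * lam / C\<^sup>2))"
      using binomial_le_pow2[of n s] M by (intro mult_mono) (auto simp del: of_nat_power simp: of_nat_power[symmetric])
    then show ?thesis unfolding t_def lam_def by (simp add: add_increasing)
  qed
qed



lemma cs_sum:
  fixes F :: "nat \<Rightarrow> real"
  assumes "\<And>x. 0 \<le> F x"
  shows "(\<Sum>x\<in>A. real x * F x)\<^sup>2 \<le> (\<Sum>x\<in>A. F x) * (\<Sum>x\<in>A. real x ^ 2 * F x)"
proof -
  have "(\<Sum>x\<in>A. real x * F x) = (\<Sum>x\<in>A. sqrt (F x) * (real x * sqrt (F x)))"
    using assms by (intro sum.cong) (auto simp: real_sqrt_mult_self mult.left_commute[of "sqrt _"] mult.assoc[symmetric])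
  also have "(\<dots>)\<^sup>2 \<le> (\<Sum>x\<in>A. (sqrt (F x))\<^sup>2) * (\<Sum>x\<in>A. (real x * sqrt (F x))\<^sup>2)"
    by (rule Cauchy_Schwarz_ineq_sum)
  also have "\<dots> = (\<Sum>x\<in>A. F x) * (\<Sum>x\<in>A. real x ^ 2 * F x)"
    using assms by (simp add: power_mult_distrib)
  finally show ?thesis .
qed

lemma Sm_facts:
  assumes d: "\<And>k. k \<in> {1..m} \<Longrightarrow> is_distr n (F k)"
  shows "0 \<le> Sm 0 n m F" "2 * Sm 0 n m F \<le> Sm 1 n m F" "2 * Sm 1 n m F \<le> Sm 2 n m F"
proof -
  have Fnn: "0 \<le> F k x" if "k \<in> {1..m}" for k x using d[OF that] unfolding is_distr_def by simp
  show "0 \<le> Sm 0 n m F" unfolding Sm_def using Fnn by (auto intro!: sum_nonneg)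
  show "2 * Sm 0 n m F \<le> Sm 1 n m F" unfolding Sm_def sum_distrib_left
    using Fnn by (intro sum_mono) (auto intro!: mult_right_mono)
  show "2 * Sm 1 n m F \<le> Sm 2 n m F" unfolding Sm_def sum_distrib_left
  proof (intro sum_mono)
    fix k x assume k: "k \<in> {1..m}" and x: "x \<in> {2..n}"
    have xx: "2 * real x \<le> real x * real x" using x by (intro mult_right_mono) auto
    show "2 * (real x ^ 1 * F k x) \<le> real x ^ 2 * F k x"
      using mult_right_mono[OF xx Fnn[OF k, of x]] by (simp add: power2_eq_square mult.assoc)
  qed
qed

lemma dir1_final:
  assumes d: "\<And>k. k \<in> {1..m} \<Longrightarrow> is_distr n (F k)" and n2: "2 \<le> n"
    and C: "0 < C" and S20: "Sm 2 n m F \<le> C * Sm 0 n m F"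
    and lam: "Sm 1 n m F / real n \<le> ln (real n)"
    and Ksmall: "C * ln (real n) / (2 * real n) \<le> 1/16"
  shows "conn_prob n m F \<le> exp (Sm 1 n m F / real n - ln (real n) + 2 * (C * ln (real n) / (2 * real n)))
            + exp (C * ln (real n) / (2 * (real n - 1)) + 4 * (C * ln (real n) / (2 * real n))) - 1"
proof -
  define a where "a k = (\<Sum>x=2..n. real x * F k x) / real n" for k
  define dd where "dd k = (\<Sum>x=2..n. real x * (real x - 1) * F k x) / (real n * (real n - 1))" for k
  define K where "K = C * ln (real n) / (2 * real n)"
  define K' where "K' = C * ln (real n) / (2 * (real n - 1))"
  define lam where "lam = Sm 1 n m F / real n"
  define U where "U = (\<Prod>k\<in>{1..m}. 1 - a k)"
  define W where "W = (\<Prod>k\<in>{1..m}. 1 - 2 * a k + dd k)"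
  have np: "real n > 0" "real n - 1 > 0" using n2 by auto
  have Fnn: "0 \<le> F k x" if "k \<in> {1..m}" for k x using d[OF that] unfolding is_distr_def by simp
  have lnn: "0 \<le> ln (real n)" using n2 by simp
  have Sf: "0 \<le> Sm 0 n m F" "2 * Sm 0 n m F \<le> Sm 1 n m F" "2 * Sm 1 n m F \<le> Sm 2 n m F" using Sm_facts[OF d] by auto
  have lam0: "0 \<le> lam" using Sf np unfolding lam_def by simp
  have S2b: "Sm 2 n m F \<le> C * real n * ln (real n) / 2"
  proof -
    have "C * Sm 0 n m F \<le> C * (Sm 1 n m F / 2)" using Sf(2) C by (intro mult_left_mono) auto
    then have "Sm 2 n m F \<le> C * (Sm 1 n m F / 2)" using S20 by linarith
    also have "Sm 1 n m F \<le> real n * ln (real n)" using lam np by (simp add: field_simps)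
    then have "C * (Sm 1 n m F / 2) \<le> C * (real n * ln (real n) / 2)" using C by simp
    finally show ?thesis by simp
  qed
  have a0: "0 \<le> a k" if "k \<in> {1..m}" for k unfolding a_def using Fnn[OF that] np by (auto intro!: sum_nonneg divide_nonneg_pos)
  have suma: "(\<Sum>k\<in>{1..m}. a k) = lam" unfolding a_def lam_def Sm_def by (simp add: sum_divide_distrib)
  have sumd: "(\<Sum>k\<in>{1..m}. dd k) \<le> K'"
  proof -
    have "(\<Sum>k\<in>{1..m}. dd k) \<le> Sm 2 n m F / (real n * (real n - 1))"
      unfolding dd_def Sm_def sum_divide_distrib[symmetric] using np
      by (intro divide_right_mono sum_mono) (auto intro!: mult_right_mono Fnn simp: power2_eq_square)
    also have "\<dots> \<le> (C * real n * ln (real n) / 2) / (real n * (real n - 1))"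
      using S2b np by (intro divide_right_mono) auto
    also have "\<dots> = K'" unfolding K'_def using np by (simp add: field_simps)
    finally show ?thesis .
  qed
  have a2: "(a k)\<^sup>2 \<le> (\<Sum>x=2..n. real x ^ 2 * F k x) / (real n)\<^sup>2" if k: "k \<in> {1..m}" for k
  proof -
    have tot: "(\<Sum>x=2..n. F k x) \<le> 1"
    proof -
      have "(\<Sum>x=2..n. F k x) \<le> (\<Sum>x\<le>n. F k x)" using Fnn[OF k] by (intro sum_mono2) auto
      then show ?thesis using d[OF k] unfolding is_distr_def by simp
    qed
    have "(\<Sum>x=2..n. real x * F k x)\<^sup>2 \<le> (\<Sum>x=2..n. F k x) * (\<Sum>x=2..n. real x ^ 2 * F k x)"
      using cs_sum[of "F k"] Fnn[OF k] by blast
    also have "\<dots> \<le> 1 * (\<Sum>x=2..n. real x ^ 2 * F k x)"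
      using tot Fnn[OF k] by (intro mult_right_mono sum_nonneg) auto
    finally show ?thesis unfolding a_def by (simp add: power_divide divide_right_mono)
  qed
  have sumA2: "(\<Sum>k\<in>{1..m}. (a k)\<^sup>2) \<le> K"
  proof -
    have "(\<Sum>k\<in>{1..m}. (a k)\<^sup>2) \<le> (\<Sum>k\<in>{1..m}. (\<Sum>x=2..n. real x ^ 2 * F k x) / (real n)\<^sup>2)"
      using a2 by (rule sum_mono)
    also have "\<dots> = Sm 2 n m F / (real n)\<^sup>2" unfolding Sm_def by (simp add: sum_divide_distrib)
    also have "\<dots> \<le> (C * real n * ln (real n) / 2) / (real n)\<^sup>2" using S2b by (intro divide_right_mono) auto
    also have "\<dots> = K" unfolding K_def using np by (simp add: field_simps power2_eq_square)
    finally show ?thesis .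
  qed
  have K0: "0 \<le> K" unfolding K_def using C lnn np by simp
  have K'0: "0 \<le> K'" unfolding K'_def using C lnn np by simp
  have aq: "a k \<le> 1/4" if k: "k \<in> {1..m}" for k
  proof -
    have "(a k)\<^sup>2 \<le> (\<Sum>k\<in>{1..m}. (a k)\<^sup>2)" using k by (intro member_le_sum) auto
    then have "(a k)\<^sup>2 \<le> 1/16" using sumA2 Ksmall unfolding K_def by linarith
    moreover have "(1/4::real)\<^sup>2 = 1/16" by (simp add: power2_eq_square)
    ultimately have "(a k)\<^sup>2 \<le> (1/4)\<^sup>2" by simp
    then show ?thesis using power2_le_imp_le[of "a k" "1/4"] by simp
  qed
  have U_lb: "exp (- lam - 2 * K) \<le> U"
  proof -
    have "(\<Sum>k\<in>{1..m}. - a k - 2 * (a k)\<^sup>2) = - (\<Sum>k\<in>{1..m}. a k) - 2 * (\<Sum>k\<in>{1..m}. (a k)\<^sup>2)"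
      by (simp add: sum_subtractf sum_negf sum_distrib_left)
    then have "exp (- lam - 2 * K) \<le> exp (\<Sum>k\<in>{1..m}. - a k - 2 * (a k)\<^sup>2)"
      using suma sumA2 by simp
    also have "\<dots> = (\<Prod>k\<in>{1..m}. exp (- a k - 2 * (a k)\<^sup>2))" by (simp add: exp_sum)
    also have "\<dots> \<le> U" unfolding U_def
    proof (rule prod_mono)
      fix k assume k: "k \<in> {1..m}"
      have "- a k - 2 * (a k)\<^sup>2 \<le> ln (1 - a k)" using ln_one_minus_pos_lower_bound[of "a k"] a0[OF k] aq[OF k] by simp
      then have "exp (- a k - 2 * (a k)\<^sup>2) \<le> exp (ln (1 - a k))" by simp
      also have "\<dots> = 1 - a k" using aq[OF k] by simp
      finally show "0 \<le> exp (- a k - 2 * (a k)\<^sup>2) \<and> exp (- a k - 2 * (a k)\<^sup>2) \<le> 1 - a k" by simp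
    qed
    finally show ?thesis .
  qed
  have Upos: "U > 0" using U_lb exp_gt_zero[of "- lam - 2 * K"] by linarith
  have w0: "0 \<le> 1 - 2 * a k + dd k" if k: "k \<in> {1..m}" for k
  proof -
    have "1 - 2 * a k + dd k = (\<Sum>A\<in>Pow {1..n}. edge_prob n (F k) A * (if 1 \<notin> A \<or> A = {1} then 1 else 0) * (if 2 \<notin> A \<or> A = {2} then 1 else 0))"
      unfolding a_def dd_def using v_formula[OF d[OF k], of 1 2] n2 by (simp add: mult.assoc)
    also have "\<dots> \<ge> 0" using edge_prob_nonneg[OF d[OF k]] by (auto intro!: sum_nonneg)
    finally show ?thesis .
  qed
  have W_ub: "W \<le> exp (- 2 * lam + K')"
  proof -
    have "W \<le> (\<Prod>k\<in>{1..m}. exp (- 2 * a k + dd k))" unfolding W_def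
    proof (rule prod_mono)
      fix k assume k: "k \<in> {1..m}"
      show "0 \<le> 1 - 2 * a k + dd k \<and> 1 - 2 * a k + dd k \<le> exp (- 2 * a k + dd k)"
        using w0[OF k] exp_ge_add_one_self[of "- 2 * a k + dd k"] by (simp add: algebra_simps)
    qed
    also have "\<dots> = exp (\<Sum>k\<in>{1..m}. - 2 * a k + dd k)" by (simp add: exp_sum)
    also have "exp (\<Sum>k\<in>{1..m}. - 2 * a k + dd k) = exp (- 2 * lam + (\<Sum>k\<in>{1..m}. dd k))"
      using suma by (simp add: sum.distrib sum_subtractf sum_distrib_left[symmetric])
    also have "\<dots> \<le> exp (- 2 * lam + K')" using sumd by simp
    finally show ?thesis .
  qed
  have W0: "0 \<le> W" unfolding W_def using w0 by (auto intro: prod_nonneg)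
  have main: "conn_prob n m F \<le> (real n * U + real n * (real n - 1) * W - (real n * U)\<^sup>2) / (real n * U)\<^sup>2"
  proof (rule dir1_bound[OF d n2 U_def[unfolded a_def] _ Upos])
    show "W = (\<Prod>k\<in>{1..m}. 1 - 2 * (\<Sum>x=2..n. real x * F k x) / real n
             + (\<Sum>x=2..n. real x * (real x - 1) * F k x) / (real n * (real n - 1)))"
      unfolding W_def a_def dd_def by simp
  qed
  also have "\<dots> = 1 / (real n * U) + ((real n - 1) / real n) * (W / U\<^sup>2) - 1"
    using np Upos by (simp add: field_simps power2_eq_square)
  also have "\<dots> \<le> exp (lam - ln (real n) + 2 * K) + exp (K' + 4 * K) - 1"
  proof -
    have "1 / (real n * U) \<le> 1 / (real n * exp (- lam - 2 * K))"
      using U_lb np Upos by (intro divide_left_mono mult_left_mono mult_pos_pos) auto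
    also have "\<dots> = exp (lam - ln (real n) + 2 * K)"
      using np by (simp add: exp_diff exp_add exp_minus field_simps)
    finally have t1: "1 / (real n * U) \<le> exp (lam - ln (real n) + 2 * K)" .
    have "(real n - 1) / real n * (W / U\<^sup>2) \<le> 1 * (W / U\<^sup>2)"
      using np W0 Upos by (intro mult_right_mono) auto
    also have "W / U\<^sup>2 \<le> exp (- 2 * lam + K') / (exp (- lam - 2 * K))\<^sup>2"
      using W_ub U_lb W0 Upos by (intro frac_le power_mono) auto
    also have "\<dots> = exp (K' + 4 * K)"
      by (simp add: power2_eq_square exp_add[symmetric] exp_diff[symmetric] field_simps)
    finally have t2: "(real n - 1) / real n * (W / U\<^sup>2) \<le> exp (K' + 4 * K)" by simp
    show ?thesis using t1 t2 by linarith
  qed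
  finally show ?thesis unfolding K_def K'_def lam_def .
qed

lemma dir2_final:
  assumes d: "\<And>k. k \<in> {1..m} \<Longrightarrow> is_distr n (F k)" and n1: "1 \<le> n"
    and C1: "1 \<le> C" and S20: "Sm 2 n m F \<le> C * Sm 0 n m F"
    and om: "ln (real n) \<le> Sm 1 n m F / real n" and sq: "C * ln (real n) \<le> 2 * sqrt (real n)"
  shows "1 - conn_prob n m F \<le> (\<Sum>s=1..n. exp (real s * (2 - 3 * (Sm 1 n m F / real n - ln (real n)) / 4)))
            + real n * (2 ^ n * exp (- real n * (Sm 1 n m F / real n) / C\<^sup>2))"
proof -
  have Sf: "0 \<le> Sm 0 n m F" "2 * Sm 0 n m F \<le> Sm 1 n m F" "2 * Sm 1 n m F \<le> Sm 2 n m F" using Sm_facts[OF d] by auto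
  have "1 - conn_prob n m F \<le> (\<Sum>s=1..n. if 2 * s \<le> n then real (n choose s) *
     exp (- max (real s / real n * Sm 1 n m F - (real s / real n)\<^sup>2 * Sm 2 n m F) (real s / real n * Sm 0 n m F)) else 0)"
    by (rule dir2_bound[OF d n1])
  also have "\<dots> \<le> (\<Sum>s=1..n. exp (real s * (2 - 3 * (Sm 1 n m F / real n - ln (real n)) / 4))
            + 2 ^ n * exp (- real n * (Sm 1 n m F / real n) / C\<^sup>2))"
  proof (rule sum_mono)
    fix s assume s: "s \<in> {1..n}"
    show "(if 2 * s \<le> n then real (n choose s) *
     exp (- max (real s / real n * Sm 1 n m F - (real s / real n)\<^sup>2 * Sm 2 n m F) (real s / real n * Sm 0 n m F)) else 0)
      \<le> exp (real s * (2 - 3 * (Sm 1 n m F / real n - ln (real n)) / 4))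
            + 2 ^ n * exp (- real n * (Sm 1 n m F / real n) / C\<^sup>2)"
    proof (cases "2 * s \<le> n")
      case True
      then show ?thesis using term_bound[of s n C "Sm 0 n m F" "Sm 1 n m F" "Sm 2 n m F"] s C1 Sf S20 om sq by simp
    next
      case False
      have "0 \<le> exp (real s * (2 - 3 * (Sm 1 n m F / real n - ln (real n)) / 4))
            + 2 ^ n * exp (- real n * (Sm 1 n m F / real n) / C\<^sup>2)" by (intro add_nonneg_nonneg) auto
      then show ?thesis using False by simp
    qed
  qed
  also have "\<dots> = (\<Sum>s=1..n. exp (real s * (2 - 3 * (Sm 1 n m F / real n - ln (real n)) / 4)))
            + real n * (2 ^ n * exp (- real n * (Sm 1 n m F / real n) / C\<^sup>2))"
    by (simp add: sum.distrib)
  finally show ?thesis .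
qed



lemma geom_small:
  fixes \<rho> :: real
  assumes "0 \<le> \<rho>" "\<rho> \<le> 1/2"
  shows "(\<Sum>s=1..n. \<rho> ^ s) \<le> 2 * \<rho> - 2 * \<rho> ^ (n + 1)"
proof (induction n)
  case 0
  then show ?case by simp
next
  case (Suc n)
  have "(\<Sum>s=1..Suc n. \<rho> ^ s) = (\<Sum>s=1..n. \<rho> ^ s) + \<rho> ^ (n + 1)" by simp
  also have "\<dots> \<le> 2 * \<rho> - 2 * \<rho> ^ (n + 1) + \<rho> ^ (n + 1)" using Suc by simp
  also have "\<dots> \<le> 2 * \<rho> - 2 * \<rho> ^ (Suc n + 1)"
  proof -
    have "2 * \<rho> ^ (Suc n + 1) = (2 * \<rho>) * \<rho> ^ (n + 1)" by simp
    also have "\<dots> \<le> 1 * \<rho> ^ (n + 1)" using assms by (intro mult_right_mono) auto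
    finally show ?thesis by simp
  qed
  finally show ?case .
qed

lemma geom_small2:
  fixes \<rho> :: real
  assumes "0 \<le> \<rho>" "\<rho> \<le> 1/2"
  shows "(\<Sum>s=1..n. \<rho> ^ s) \<le> 2 * \<rho>"
  using geom_small[OF assms, of n] assms by (smt (verit) zero_le_power)

theorem mainTheorem5:
  fixes m :: "nat \<Rightarrow> nat" and f :: "nat \<Rightarrow> nat \<Rightarrow> nat \<Rightarrow> real"
  assumes m_pos: "\<And>n. m n \<ge> 1"
    and distr: "\<And>n k. k \<in> {1..m n} \<Longrightarrow> is_distr n (f n k)"
    and mom: "(\<lambda>n. moment 2 n (m n) (f n)) \<in> O(\<lambda>n. moment 0 n (m n) (f n))"
  shows "(filterlim (\<lambda>n. ln (real n) - real (m n) / real n * moment 1 n (m n) (f n)) at_top sequentially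
            \<longrightarrow> (\<lambda>n. conn_prob n (m n) (f n)) \<longlonglongrightarrow> 0)
       \<and> (filterlim (\<lambda>n. ln (real n) - real (m n) / real n * moment 1 n (m n) (f n)) at_bot sequentially
            \<longrightarrow> (\<lambda>n. conn_prob n (m n) (f n)) \<longlonglongrightarrow> 1)"
proof -
  define S where "S j n = Sm j n (m n) (f n)" for j n
  have mpos: "real (m n) > 0" for n using m_pos[of n] by simp
  have mom_eq: "moment j n (m n) (f n) = S j n / real (m n)" for j n
    unfolding moment_def S_def Sm_def by simp
  have L_eq: "real (m n) / real n * moment 1 n (m n) (f n) = S 1 n / real n" for n
    unfolding mom_eq using mpos[of n] by (simp add: field_simps)
  have Sf: "0 \<le> S 0 n" "2 * S 0 n \<le> S 1 n" "2 * S 1 n \<le> S 2 n" for n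
    using Sm_facts[of "m n" n "f n", OF distr] unfolding S_def by auto
  obtain c where c0: "0 < c" and cev: "eventually (\<lambda>n. norm (moment 2 n (m n) (f n)) \<le> c * norm (moment 0 n (m n) (f n))) sequentially"
    using mom by (rule landau_o.bigE)
  define C where "C = max c 1"
  have C1: "1 \<le> C" unfolding C_def by simp
  have evS: "eventually (\<lambda>n. S 2 n \<le> C * S 0 n) sequentially"
    using cev
  proof eventually_elim
    case (elim n)
    have p2: "0 \<le> S 2 n / real (m n)" "0 \<le> S 0 n / real (m n)" using Sf[of n] mpos[of n] by auto
    have "S 2 n / real (m n) \<le> c * (S 0 n / real (m n))"
      using elim unfolding mom_eq real_norm_def abs_of_nonneg[OF p2(1)] abs_of_nonneg[OF p2(2)] .
    then have "S 2 n \<le> c * S 0 n" using mpos[of n] by (simp add: field_simps)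
    also have "\<dots> \<le> C * S 0 n" unfolding C_def using Sf[of n] by (intro mult_right_mono) auto
    finally show ?case .
  qed
  have conn_nn: "0 \<le> conn_prob n (m n) (f n)" for n
    unfolding conn_eq using wt_nonneg[OF distr] by (auto intro!: sum_nonneg)
  have conn_le: "conn_prob n (m n) (f n) \<le> 1" for n
  proof -
    have "conn_prob n (m n) (f n) \<le> (\<Sum>V\<in>Om n (m n). wt n (m n) (f n) V)"
      unfolding conn_eq using wt_nonneg[OF distr] by (intro sum_mono) auto
    then show ?thesis using wt_sum[OF distr] by simp
  qed
  define K where "K n = C / 2 * (ln (real n) / real n)" for n :: nat
  have Klim: "K \<longlonglongrightarrow> 0" unfolding K_def using tendsto_mult_right_zero[OF lim_ln_over_n, of "C/2"] by (simp add: mult.commute)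
  show ?thesis
  proof (intro conjI impI)
    assume A0: "filterlim (\<lambda>n. ln (real n) - real (m n) / real n * moment 1 n (m n) (f n)) at_top sequentially"
    have A: "filterlim (\<lambda>n. S 1 n / real n - ln (real n)) at_bot sequentially"
      using A0 unfolding L_eq filterlim_uminus_at_bot by simp
    have ev1: "eventually (\<lambda>n. S 1 n / real n - ln (real n) \<le> 0) sequentially"
    proof -
      have "\<forall>Z. eventually (\<lambda>n. S 1 n / real n - ln (real n) \<le> Z) sequentially"
        using A unfolding filterlim_at_bot .
      then show ?thesis by (rule spec)
    qed
    have ev2: "eventually (\<lambda>n. K n < 1/16) sequentially"
      using order_tendstoD(2)[OF Klim, of "1/16"] by simp
    define g where "g n = exp (S 1 n / real n - ln (real n) + 2 * K n) + exp (6 * K n) - 1" for n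
    have evb: "eventually (\<lambda>n. conn_prob n (m n) (f n) \<le> g n) sequentially"
      using ev1 ev2 evS eventually_ge_at_top[of 2]
    proof eventually_elim
      case (elim n)
      have Keq: "C * ln (real n) / (2 * real n) = K n" unfolding K_def by simp
      have "conn_prob n (m n) (f n) \<le> exp (Sm 1 n (m n) (f n) / real n - ln (real n) + 2 * (C * ln (real n) / (2 * real n)))
            + exp (C * ln (real n) / (2 * (real n - 1)) + 4 * (C * ln (real n) / (2 * real n))) - 1"
        using elim C1 by (intro dir1_final[OF distr]) (auto simp: S_def Keq)
      also have "C * ln (real n) / (2 * (real n - 1)) \<le> 2 * K n"
      proof -
        have "real n \<le> 2 * (real n - 1)" using elim by simp
        moreover have "0 \<le> C * ln (real n)" using C1 elim by simp
        ultimately have "C * ln (real n) / (2 * (real n - 1)) \<le> C * ln (real n) / real n"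
          using elim by (intro divide_left_mono) auto
        then show ?thesis unfolding K_def by simp
      qed
      then have "exp (C * ln (real n) / (2 * (real n - 1)) + 4 * (C * ln (real n) / (2 * real n))) \<le> exp (6 * K n)"
        unfolding Keq by simp
      finally show ?case unfolding g_def S_def Keq by simp
    qed
    have glim: "g \<longlonglongrightarrow> 0"
    proof -
      have "filterlim (\<lambda>n. S 1 n / real n - ln (real n) + 2 * K n) at_bot sequentially"
        using filterlim_tendsto_add_at_bot_iff[OF tendsto_mult_left_zero[OF Klim, of 2], of "\<lambda>n. S 1 n / real n - ln (real n)"] A
        by (simp add: add.commute mult.commute)
      then have e1: "(\<lambda>n. exp (S 1 n / real n - ln (real n) + 2 * K n)) \<longlonglongrightarrow> 0"
        by (rule filterlim_compose[OF exp_at_bot])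
      have e2: "(\<lambda>n. exp (6 * K n)) \<longlonglongrightarrow> 1"
        using tendsto_exp[OF tendsto_mult_left_zero[OF Klim, of 6]] by (simp add: mult.commute)
      show ?thesis unfolding g_def using tendsto_diff[OF tendsto_add[OF e1 e2] tendsto_const[of 1]] by simp
    qed
    show "(\<lambda>n. conn_prob n (m n) (f n)) \<longlonglongrightarrow> 0"
      by (rule tendsto_sandwich[OF _ evb tendsto_const glim]) (simp add: conn_nn)
  next
    assume B0: "filterlim (\<lambda>n. ln (real n) - real (m n) / real n * moment 1 n (m n) (f n)) at_bot sequentially"
    define \<omega> where "\<omega> n = S 1 n / real n - ln (real n)" for n
    have B: "filterlim \<omega> at_top sequentially"
      using B0 unfolding L_eq \<omega>_def filterlim_uminus_at_top by simp
    have Bz: "\<forall>Z. eventually (\<lambda>n. Z \<le> \<omega> n) sequentially" using B unfolding filterlim_at_top .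
    define \<rho> where "\<rho> n = exp (2 - 3 * \<omega> n / 4)" for n
    have rlim: "\<rho> \<longlonglongrightarrow> 0"
    proof -
      have "filterlim (\<lambda>n. 2 - 3 * \<omega> n / 4) at_bot sequentially"
        unfolding filterlim_at_bot
      proof
        fix Z :: real
        show "eventually (\<lambda>n. 2 - 3 * \<omega> n / 4 \<le> Z) sequentially"
          using spec[OF Bz, of "4 * (2 - Z) / 3"] by eventually_elim simp
      qed
      then show ?thesis unfolding \<rho>_def by (rule filterlim_compose[OF exp_at_bot])
    qed
    have nlim: "(\<lambda>n. real n * exp (- real n)) \<longlonglongrightarrow> 0"
    proof -
      have "(\<lambda>n. real n ^ 1 / exp (real n)) \<longlonglongrightarrow> 0"
        by (rule filterlim_compose[OF tendsto_power_div_exp_0 filterlim_real_sequentially])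
      then show ?thesis by (simp add: exp_minus divide_inverse)
    qed
    define h where "h n = 2 * \<rho> n + real n * exp (- real n)" for n
    have hlim: "h \<longlonglongrightarrow> 0" unfolding h_def using tendsto_add[OF tendsto_mult_right_zero[OF rlim, of 2] nlim]
      by (simp add: mult.commute)
    have e3: "eventually (\<lambda>n. C * ln (real n) \<le> 2 * sqrt (real n)) sequentially"
    proof -
      have "eventually (\<lambda>n. ln (real n) / real n powr (1/2) < 2 / C) sequentially"
        using order_tendstoD(2)[OF lim_ln_over_power[of "1/2"], of "2 / C"] C1 by simp
      then show ?thesis using eventually_ge_at_top[of 1]
      proof eventually_elim
        case (elim n)
        have sp: "sqrt (real n) > 0" using elim by simp
        have "ln (real n) / sqrt (real n) < 2 / C" using elim by (simp add: powr_half_sqrt)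
        then have "ln (real n) < 2 / C * sqrt (real n)" using sp by (simp add: field_simps)
        then have "C * ln (real n) < C * (2 / C * sqrt (real n))" using C1 by (intro mult_strict_left_mono) auto
        also have "C * (2 / C * sqrt (real n)) = 2 * sqrt (real n)" using C1 by simp
        finally show ?case by simp
      qed
    qed
    have e5: "eventually (\<lambda>n. \<rho> n < 1/2) sequentially" using order_tendstoD(2)[OF rlim, of "1/2"] by simp
    have evb: "eventually (\<lambda>n. 1 - conn_prob n (m n) (f n) \<le> h n) sequentially"
      using eventually_ge_at_top[of 2] spec[OF Bz, of 0] spec[OF Bz, of "C\<^sup>2 * (ln 2 + 1)"] e3 evS e5
    proof eventually_elim
      case (elim n)
      have n1: "1 \<le> n" using elim by simp
      have lnn: "0 \<le> ln (real n)" using n1 by simp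
      have om: "ln (real n) \<le> Sm 1 n (m n) (f n) / real n" using elim unfolding \<omega>_def S_def by simp
      have "1 - conn_prob n (m n) (f n) \<le> (\<Sum>s=1..n. exp (real s * (2 - 3 * (Sm 1 n (m n) (f n) / real n - ln (real n)) / 4)))
            + real n * (2 ^ n * exp (- real n * (Sm 1 n (m n) (f n) / real n) / C\<^sup>2))"
        using elim C1 om by (intro dir2_final[OF distr n1]) (auto simp: S_def)
      also have "(\<Sum>s=1..n. exp (real s * (2 - 3 * (Sm 1 n (m n) (f n) / real n - ln (real n)) / 4))) = (\<Sum>s=1..n. \<rho> n ^ s)"
        unfolding \<rho>_def \<omega>_def S_def by (simp add: exp_of_nat_mult)
      also have "\<dots> \<le> 2 * \<rho> n" using elim unfolding \<rho>_def by (intro geom_small2) auto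
      also have "2 ^ n * exp (- real n * (Sm 1 n (m n) (f n) / real n) / C\<^sup>2) \<le> exp (- real n)"
      proof -
        define L where "L = Sm 1 n (m n) (f n) / real n"
        have "C\<^sup>2 * (ln 2 + 1) \<le> L - ln (real n)" using elim unfolding L_def \<omega>_def S_def by simp
        then have LL: "C\<^sup>2 * (ln 2 + 1) \<le> L" using lnn by linarith
        have C2: "C\<^sup>2 > 0" using C1 by simp
        have "ln 2 + 1 \<le> L / C\<^sup>2" using LL C2 by (simp add: field_simps)
        then have "real n * (ln 2 + 1) \<le> real n * (L / C\<^sup>2)" by (intro mult_left_mono) auto
        then have "real n * ln 2 - real n * L / C\<^sup>2 \<le> - real n" by (simp add: algebra_simps)
        moreover have "(2::real) ^ n = exp (real n * ln 2)" by (simp add: exp_of_nat_mult)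
        ultimately show ?thesis unfolding L_def[symmetric] by (simp add: exp_add[symmetric])
      qed
      then have "real n * (2 ^ n * exp (- real n * (Sm 1 n (m n) (f n) / real n) / C\<^sup>2)) \<le> real n * exp (- real n)"
        by (intro mult_left_mono) auto
      finally show ?case unfolding h_def by simp
    qed
    have "(\<lambda>n. 1 - conn_prob n (m n) (f n)) \<longlonglongrightarrow> 0"
      by (rule tendsto_sandwich[OF _ evb tendsto_const hlim]) (simp add: conn_le)
    from tendsto_diff[OF tendsto_const[of 1] this]
    show "(\<lambda>n. conn_prob n (m n) (f n)) \<longlonglongrightarrow> 1" by simp
  qed
qed


end
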